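(* Let $L$ be a flat layout. There exists a tuple morphism $f$ with $L_f=L$ if and only if $L$ is tractable.
   Context: $\langle n\rangle_*=\{*,1,\dots,n\}$. A tuple morphism $f:(s_1,\dots,s_m)\to(t_1,\dots,t_n)$ between tuples of positive integers is given by a pointed map $\alpha:\langle m\rangle_*\to\langle n\rangle_*$ ($\alpha( * )=*$) such that each $j\in\{1,\dots,n\}$ has at most one preimage and $s_i=t_{\alpha(i)}$ whenever $\alpha(i)\ne*$. Its encoded flat layout is $L_f=(s_1,\dots,s_m):(d_1,\dots,d_m)$ with $d_i=0$ if $\alpha(i)=*$ and $d_i=\prod_{j<\alpha(i)}t_j$ otherwise. A flat layout is a pair $(s_1,\dots,s_m):(d_1,\dots,d_m)$ of a tuple of positive integers and a tuple of nonnegative integers of the same length, with modes $s_i:d_i$. Order modes by $s:d\preceq s':d'$ iff $d<d'$ or ($d=d'$ and $s\le s'$); $\mathrm{sort}(L)$ is the stable reordering of the modes into $\preceq$-nondecreasing order. $L$ is tractable if, writing $\mathrm{sort}(L)=(s'_1,\dots,s'_m):(d'_1,\dots,d'_m)$, for each $1\le i<m$ either $d'_i=0$ or $s'_id'_i$ divides $d'_{i+1}$. *)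

theory Defs
  imports Main "HOL-Library.Product_Lexorder"
begin

text \<open>Positions are 1-indexed as in the paper: the i-th entry of a list xs is xs ! (i - 1).
  The pointed set \<langle>n\<rangle>_* = {*,1,...,n} is modelled by {0,1,...,n} :: nat set,
  with 0 playing the role of the base point *. A pointed map
  \<langle>m\<rangle>_* \<rightarrow> \<langle>n\<rangle>_* is a function alpha :: nat \<Rightarrow> nat with alpha 0 = 0
  and alpha i \<in> {0..n} for i \<in> {1..m} (values outside {0..m} are irrelevant).\<close>

definition pos_tuple :: "nat list \<Rightarrow> bool" where
  "pos_tuple xs \<longleftrightarrow> (\<forall>x\<in>set xs. 0 < x)"

definition tuple_morphism :: "nat list \<Rightarrow> nat list \<Rightarrow> (nat \<Rightarrow> nat) \<Rightarrow> bool" where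
  "tuple_morphism s t \<alpha> \<longleftrightarrow>
     pos_tuple s \<and> pos_tuple t \<and> \<alpha> 0 = 0 \<and>
     (\<forall>i\<in>{1..length s}. \<alpha> i \<le> length t) \<and>
     (\<forall>i\<in>{1..length s}. \<forall>i'\<in>{1..length s}. \<alpha> i \<noteq> 0 \<and> \<alpha> i = \<alpha> i' \<longrightarrow> i = i') \<and>
     (\<forall>i\<in>{1..length s}. \<alpha> i \<noteq> 0 \<longrightarrow> s ! (i - 1) = t ! (\<alpha> i - 1))"

definition encoded_layout :: "nat list \<Rightarrow> nat list \<Rightarrow> (nat \<Rightarrow> nat) \<Rightarrow> nat list \<times> nat list" where
  "encoded_layout s t \<alpha> =
     (s, map (\<lambda>i. if \<alpha> i = 0 then 0 else prod_list (take (\<alpha> i - 1) t)) [1..<length s + 1])"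

definition flat_layout :: "nat list \<Rightarrow> nat list \<Rightarrow> bool" where
  "flat_layout S D \<longleftrightarrow> pos_tuple S \<and> length S = length D"

text \<open>Modes are pairs (s, d). The order s:d \<preceq> s':d' iff d < d' or (d = d' and s \<le> s')
  is lexicographic order on (d, s); sort is the stable sort by this key.\<close>
definition sort_layout :: "nat list \<Rightarrow> nat list \<Rightarrow> (nat \<times> nat) list" where
  "sort_layout S D = sort_key (\<lambda>(s, d). (d, s)) (zip S D)"

definition tractable :: "nat list \<Rightarrow> nat list \<Rightarrow> bool" where
  "tractable S D \<longleftrightarrow>
     (let M = sort_layout S D in
      \<forall>i. Suc i < length M \<longrightarrow>
          snd (M ! i) = 0 \<or> fst (M ! i) * snd (M ! i) dvd snd (M ! Suc i))"

end

theory Submission imports Defs begin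

lemma map_insort_key_comp:
  "map g (insort_key (f \<circ> g) x xs) = insort_key f (g x) (map g xs)"
  by (induction xs) simp_all

lemma map_sort_key_comp:
  "map g (sort_key (f \<circ> g) xs) = sort_key f (map g xs)"
  by (induction xs) (simp_all add: map_insort_key_comp[unfolded comp_def])

definition Ps :: "nat list \<Rightarrow> nat list \<Rightarrow> nat list" where
  "Ps S D = sort_key (\<lambda>i. (D!i, S!i)) [0..<length S]"

lemma sort_layout_Ps:
  assumes "length S = length D"
  shows "sort_layout S D = map (\<lambda>i. (S!i, D!i)) (Ps S D)"
proof -
  have z: "zip S D = map (\<lambda>i. (S!i, D!i)) [0..<length S]"
    using assms by (intro nth_equalityI) auto
  have e: "(\<lambda>(s, d). (d, s)) \<circ> (\<lambda>i. (S!i, D!i)) = (\<lambda>i. (D!i, S!i))" by auto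
  have "map (\<lambda>i. (S!i, D!i)) (sort_key ((\<lambda>(s, d). (d, s)) \<circ> (\<lambda>i. (S!i, D!i))) [0..<length S])
     = sort_key (\<lambda>(s, d). (d, s)) (map (\<lambda>i. (S!i, D!i)) [0..<length S])"
    by (rule map_sort_key_comp)
  then show ?thesis unfolding sort_layout_def Ps_def z e by (rule sym)
qed

lemma Ps_props:
  "distinct (Ps S D)" "set (Ps S D) = {0..<length S}" "length (Ps S D) = length S"
  "sorted (map (\<lambda>i. (D!i, S!i)) (Ps S D))"
  unfolding Ps_def by auto

lemma prod_take_dvd:
  fixes t :: "nat list"
  assumes "m \<le> n" shows "prod_list (take m t) dvd prod_list (take n t)"
proof -
  have "take n t = take m t @ take (n - m) (drop m t)"
    using take_add[of m "n-m" t] assms by simp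
  then show ?thesis by (metis dvd_triv_left prod_list.append)
qed


lemma prod_pos:
  fixes t :: "nat list"
  assumes "pos_tuple t" shows "0 < prod_list (take m t)"
proof -
  have "0 \<notin> set (take m t)" using assms unfolding pos_tuple_def
    by (metis in_set_takeD less_irrefl)
  then show ?thesis by (metis gr0I prod_list_zero_iff)
qed

lemma dir1_pair:
  assumes tm: "tuple_morphism s t \<alpha>" and enc: "encoded_layout s t \<alpha> = (S, D)"
    and ij: "i < length S" "j < length S" "i \<noteq> j"
    and le: "(D!i, S!i) \<le> (D!j, S!j)" and nz: "D!i \<noteq> 0"
  shows "S!i * D!i dvd D!j"
proof -
  have S: "S = s" and Dd: "D = map (\<lambda>i. if \<alpha> i = 0 then 0 else prod_list (take (\<alpha> i - 1) t)) [1..<length s + 1]"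
    using enc unfolding encoded_layout_def by auto
  have Di: "D!k = (if \<alpha> (Suc k) = 0 then 0 else prod_list (take (\<alpha> (Suc k) - 1) t))" if "k < length S" for k
  proof -
    have "k < length [1..<length s + 1]" using that S by simp
    moreover have "[1..<length s + 1] ! k = Suc k" using that S by (simp del: upt_Suc)
    ultimately show ?thesis unfolding Dd by (simp del: upt_Suc)
  qed
  have pt: "pos_tuple t" and ps: "pos_tuple s" using tm unfolding tuple_morphism_def by auto
  define a where "a = \<alpha> (Suc i)"
  define b where "b = \<alpha> (Suc j)"
  have a0: "a \<noteq> 0" using nz Di[OF ij(1)] a_def by (cases "a = 0") auto
  have Dia: "D!i = prod_list (take (a - 1) t)" using Di[OF ij(1)] a0 a_def by auto
  have dle: "D!i \<le> D!j" using le by (auto simp: less_eq_prod_def)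
  have b0: "b \<noteq> 0" using Di[OF ij(2)] b_def dle nz by (cases "b = 0") auto
  have Djb: "D!j = prod_list (take (b - 1) t)" using Di[OF ij(2)] b0 b_def by auto
  have rng: "Suc i \<in> {1..length s}" "Suc j \<in> {1..length s}" using ij S by auto
  have ab: "a \<noteq> b" using tm rng ij(3) a0 unfolding tuple_morphism_def a_def b_def by fastforce
  have alt: "a \<le> length t" "b \<le> length t" using tm rng unfolding tuple_morphism_def a_def b_def by auto
  have Si: "S!i = t!(a-1)" using tm rng a0 S unfolding tuple_morphism_def a_def by (metis diff_Suc_1)
  have Sj: "S!j = t!(b-1)" using tm rng b0 S unfolding tuple_morphism_def b_def by (metis diff_Suc_1)
  show ?thesis
  proof (cases "a < b")
    case True
    have "S!i * D!i = prod_list (take a t)"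
      using Si Dia a0 alt take_Suc_conv_app_nth[of "a-1" t] by simp
    also have "\<dots> dvd prod_list (take (b-1) t)" using True by (intro prod_take_dvd) auto
    finally show ?thesis using Djb by simp
  next
    case False
    then have ba: "b < a" using ab by simp
    have "take (a-1) t = take (b-1) t @ take (a-b) (drop (b-1) t)"
      using take_add[of "b-1" "a-b" t] ba b0 by simp
    moreover have "take (a-b) (drop (b-1) t) = t!(b-1) # take (a-b-1) (drop b t)"
    proof -
      have bl: "b - 1 < length t" using ba alt b0 by linarith
      have dd: "drop (b-1) t = t!(b-1) # drop b t"
        using Cons_nth_drop_Suc[OF bl] b0 by simp
      obtain m where m: "a - b = Suc m" using ba by (metis Suc_diff_Suc)
      show ?thesis using m dd by simp
    qed
    ultimately have eq: "D!i = D!j * (t!(b-1) * prod_list (take (a-b-1) (drop b t)))"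
      using Dia Djb by simp
    have dj: "0 < D!j" using dle nz by simp
    have r: "0 < prod_list (take (a-b-1) (drop b t))"
      using pt unfolding pos_tuple_def by (intro prod_pos) (auto simp: pos_tuple_def dest: in_set_dropD)
    have bl: "b - 1 < length t" using ba alt b0 by linarith
    have tpos: "0 < t!(b-1)" using pt bl unfolding pos_tuple_def by (meson nth_mem)
    define X where "X = t!(b-1) * prod_list (take (a-b-1) (drop b t))"
    have X0: "0 < X" unfolding X_def using tpos r by simp
    have "D!j * X \<le> D!j * 1" using eq dle unfolding X_def by simp
    then have "X \<le> 1" using dj by simp
    then have "t!(b-1) * prod_list (take (a-b-1) (drop b t)) = 1" using X0 unfolding X_def by linarith
    then have tb: "t!(b-1) = 1" by simp
    have dij: "D!i = D!j" using eq \<open>t!(b-1) * _ = 1\<close> by simp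
    have "S!i \<le> S!j" using le dij by (auto simp: less_eq_prod_def)
    then have "S!i \<le> 1" using Sj tb by simp
    moreover have "0 < S!i" using ps S ij(1) unfolding pos_tuple_def by (metis nth_mem)
    ultimately have "S!i = 1" by simp
    then show ?thesis using dij by simp
  qed
qed


lemma dir1:
  assumes tm: "tuple_morphism s t \<alpha>" and enc: "encoded_layout s t \<alpha> = (S, D)"
  shows "tractable S D"
proof -
  have len: "length S = length D" using enc unfolding encoded_layout_def by (auto simp del: upt_Suc)
  let ?P = "Ps S D"
  have M: "sort_layout S D = map (\<lambda>i. (S!i, D!i)) ?P" by (rule sort_layout_Ps[OF len])
  show ?thesis unfolding tractable_def Let_def M
  proof (intro allI impI)
    fix k assume k: "Suc k < length (map (\<lambda>i. (S!i, D!i)) ?P)"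
    then have k': "Suc k < length ?P" by simp
    define i where "i = ?P ! k"
    define j where "j = ?P ! Suc k"
    have ij: "i < length S" "j < length S" using k' Ps_props(2,3) nth_mem unfolding i_def j_def
      by (metis Suc_lessD atLeastLessThan_iff)+
    have "i \<noteq> j" using k' Ps_props(1) unfolding i_def j_def by (simp add: nth_eq_iff_index_eq)
    moreover have "(D!i, S!i) \<le> (D!j, S!j)"
      using sorted_nth_mono[OF Ps_props(4)[where S=S and D=D], of k "Suc k"] k' unfolding i_def j_def by simp
    ultimately have "D!i = 0 \<or> S!i * D!i dvd D!j" using dir1_pair[OF tm enc] ij by blast
    then show "snd (map (\<lambda>i. (S!i, D!i)) ?P ! k) = 0 \<or>
      fst (map (\<lambda>i. (S!i, D!i)) ?P ! k) * snd (map (\<lambda>i. (S!i, D!i)) ?P ! k)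
        dvd snd (map (\<lambda>i. (S!i, D!i)) ?P ! Suc k)"
      using k' unfolding i_def j_def by simp
  qed
qed


lemma chain_pairwise:
  fixes M :: "(nat \<times> nat) list"
  assumes mono: "\<And>a b. a \<le> b \<Longrightarrow> b < length M \<Longrightarrow> snd (M!a) \<le> snd (M!b)"
    and cons: "\<And>i. Suc i < length M \<Longrightarrow> snd (M!i) = 0 \<or> fst (M!i) * snd (M!i) dvd snd (M!Suc i)"
  shows "a < b \<Longrightarrow> b < length M \<Longrightarrow> snd (M!a) = 0 \<or> fst (M!a) * snd (M!a) dvd snd (M!b)"
proof (induction b)
  case 0 then show ?case by simp
next
  case (Suc b)
  show ?case
  proof (cases "a = b")
    case True then show ?thesis using cons Suc.prems by simp
  next
    case False
    then have ab: "a < b" using Suc.prems by simp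
    show ?thesis
    proof (cases "snd (M!a) = 0")
      case True then show ?thesis by simp
    next
      case False
      have h1: "fst (M!a) * snd (M!a) dvd snd (M!b)" using Suc.IH ab Suc.prems False by simp
      have "snd (M!a) \<le> snd (M!b)" using mono ab Suc.prems by simp
      then have "snd (M!b) \<noteq> 0" using False by simp
      then have "fst (M!b) * snd (M!b) dvd snd (M!Suc b)" using cons[of b] Suc.prems(2) by auto
      then have "snd (M!b) dvd snd (M!Suc b)" using dvd_mult_right by blast
      then show ?thesis using h1 dvd_trans by blast
    qed
  qed
qed

fun mk :: "nat \<Rightarrow> (nat \<times> nat) list \<Rightarrow> nat list" where
  "mk p [] = []"
| "mk p ((s, d) # xs) = (d div p) # s # mk (s * d) xs"

lemma mk_len: "length (mk p xs) = 2 * length xs"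
  by (induction p xs rule: mk.induct) auto

lemma mk_odd: "k < length xs \<Longrightarrow> mk p xs ! (2 * k + 1) = fst (xs ! k)"
proof (induction p xs arbitrary: k rule: mk.induct)
  case (1 p) then show ?case by simp
next
  case (2 p s d xs)
  then show ?case by (cases k) auto
qed

definition Qd :: "nat \<times> nat \<Rightarrow> nat \<times> nat \<Rightarrow> bool" where
  "Qd x y \<longleftrightarrow> fst x * snd x dvd snd y"

lemma mk_prod:
  "0 < p \<Longrightarrow> (\<forall>y\<in>set xs. p dvd snd y \<and> 0 < fst y \<and> 0 < snd y) \<Longrightarrow> sorted_wrt Qd xs
   \<Longrightarrow> k < length xs \<Longrightarrow> p * prod_list (take (2 * k + 1) (mk p xs)) = snd (xs ! k)"
proof (induction p xs arbitrary: k rule: mk.induct)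
  case (1 p) then show ?case by simp
next
  case (2 p s d xs)
  have pd: "p * (d div p) = d" using 2(3) by simp
  show ?case
  proof (cases k)
    case 0 then show ?thesis using pd by simp
  next
    case (Suc k')
    have "s * d * prod_list (take (2 * k' + 1) (mk (s * d) xs)) = snd (xs ! k')"
      using 2 Suc by (intro "2.IH") (auto simp: Qd_def)
    moreover have "take (2 * k + 1) (mk p ((s, d) # xs)) = (d div p) # s # take (2 * k' + 1) (mk (s * d) xs)"
      using Suc by simp
    ultimately show ?thesis using pd Suc by (simp add: mult.assoc mult.left_commute) (metis mult.assoc mult.commute)
  qed
qed

lemma mk_pos:
  "0 < p \<Longrightarrow> (\<forall>y\<in>set xs. p dvd snd y \<and> 0 < fst y \<and> 0 < snd y) \<Longrightarrow> sorted_wrt Qd xs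
   \<Longrightarrow> pos_tuple (mk p xs)"
proof (induction p xs rule: mk.induct)
  case (1 p) then show ?case by (simp add: pos_tuple_def)
next
  case (2 p s d xs)
  have "pos_tuple (mk (s * d) xs)" using 2 by (intro "2.IH") (auto simp: Qd_def)
  moreover have "0 < d div p" using 2(3) by (auto elim!: dvdE)
  ultimately show ?case using 2(3) by (simp add: pos_tuple_def)
qed


definition idx :: "nat list \<Rightarrow> nat \<Rightarrow> nat" where
  "idx P x = (THE k. k < length P \<and> P ! k = x)"

lemma idx_props:
  assumes "distinct P" "x \<in> set P"
  shows "idx P x < length P \<and> P ! idx P x = x"
proof -
  have "\<exists>!k. k < length P \<and> P ! k = x"
    using assms by (metis in_set_conv_nth nth_eq_iff_index_eq)
  then show ?thesis unfolding idx_def by (rule theI')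
qed

lemma dir2:
  assumes fl: "flat_layout S D" and tr: "tractable S D"
  shows "\<exists>s t \<alpha>. tuple_morphism s t \<alpha> \<and> encoded_layout s t \<alpha> = (S, D)"
proof -
  have len: "length S = length D" and psS: "pos_tuple S" using fl unfolding flat_layout_def by auto
  define n where "n = length S"
  define g where "g = (\<lambda>i. (S!i, D!i))"
  define P0 where "P0 = Ps S D"
  define M where "M = map g P0"
  have MM: "sort_layout S D = M" unfolding M_def g_def P0_def by (rule sort_layout_Ps[OF len])
  have cons: "\<And>i. Suc i < length M \<Longrightarrow> snd (M!i) = 0 \<or> fst (M!i) * snd (M!i) dvd snd (M!Suc i)"
    using tr unfolding tractable_def Let_def MM by blast
  have mono: "snd (M!a) \<le> snd (M!b)" if "a \<le> b" "b < length M" for a b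
  proof -
    have "(D!(P0!a), S!(P0!a)) \<le> (D!(P0!b), S!(P0!b))"
      using sorted_nth_mono[OF Ps_props(4)[where S=S and D=D], of a b] that unfolding M_def P0_def by simp
    then show ?thesis using that unfolding M_def g_def by (auto simp: less_eq_prod_def)
  qed
  have swQ: "sorted_wrt (\<lambda>x y. snd x = 0 \<or> fst x * snd x dvd snd y) M"
    unfolding sorted_wrt_iff_nth_less using chain_pairwise[OF mono cons] by blast
  define P where "P = filter (\<lambda>i. D!i \<noteq> 0) P0"
  have MP: "filter (\<lambda>x. snd x \<noteq> 0) M = map g P"
    unfolding M_def P_def filter_map by (simp add: g_def comp_def)
  have swP: "sorted_wrt Qd (map g P)"
    using sorted_wrt_filter[OF swQ, of "\<lambda>x. snd x \<noteq> 0"] unfolding MP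
    by (rule sorted_wrt_mono_rel[rotated]) (auto simp: Qd_def g_def P_def)
  have setP: "set P = {i. i < n \<and> D!i \<noteq> 0}"
    unfolding P_def P0_def n_def using Ps_props(2)[of S D] by auto
  have distP: "distinct P" unfolding P_def P0_def using Ps_props(1) by simp
  have elts: "\<forall>y\<in>set (map g P). 1 dvd snd y \<and> 0 < fst y \<and> 0 < snd y"
    using setP psS unfolding g_def pos_tuple_def n_def by auto
  define t where "t = mk 1 (map g P)"
  define \<alpha> where "\<alpha> = (\<lambda>i. if 0 < i \<and> D!(i-1) \<noteq> 0 then 2 * idx P (i-1) + 2 else 0)"
  have pt: "pos_tuple t" unfolding t_def using mk_pos[OF _ elts swP] by simp
  have lt: "length t = 2 * length P" unfolding t_def mk_len by simp
  have inP: "i - 1 \<in> set P" "idx P (i-1) < length P" "P ! idx P (i-1) = i - 1"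
    if "i \<in> {1..n}" "D!(i-1) \<noteq> 0" for i
  proof -
    have "1 \<le> i" "i \<le> n" using that(1) by auto
    then have "i - 1 < n" by linarith
    then have a: "i - 1 \<in> set P" using that(2) setP by simp
    then show "i - 1 \<in> set P" .
    show "idx P (i-1) < length P" "P ! idx P (i-1) = i - 1" using idx_props[OF distP a] by simp_all
  qed
  have tm: "tuple_morphism S t \<alpha>"
    unfolding tuple_morphism_def
  proof (intro conjI ballI impI)
    show "pos_tuple S" "pos_tuple t" by (fact psS, fact pt)
    show "\<alpha> 0 = 0" unfolding \<alpha>_def by simp
  next
    fix i assume i: "i \<in> {1..length S}"
    show "\<alpha> i \<le> length t"
    proof (cases "D!(i-1) = 0")
      case True then show ?thesis unfolding \<alpha>_def by simp
    next
      case False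
      then have "idx P (i-1) < length P" using inP(2)[of i] i unfolding n_def by blast
      then show ?thesis using False i lt unfolding \<alpha>_def by simp
    qed
  next
    fix i i' assume i: "i \<in> {1..length S}" and i': "i' \<in> {1..length S}"
      and h: "\<alpha> i \<noteq> 0 \<and> \<alpha> i = \<alpha> i'"
    then have d: "D!(i-1) \<noteq> 0" "D!(i'-1) \<noteq> 0" unfolding \<alpha>_def by (auto split: if_splits)
    have pos: "1 \<le> i" "1 \<le> i'" using i i' by auto
    have ai: "\<alpha> i = 2 * idx P (i-1) + 2" using pos d(1) unfolding \<alpha>_def by simp
    have ai': "\<alpha> i' = 2 * idx P (i'-1) + 2" using pos d(2) unfolding \<alpha>_def by simp
    have "idx P (i-1) = idx P (i'-1)" using h ai ai' by simp
    moreover have "P ! idx P (i-1) = i - 1" using inP(3)[of i] i d(1) n_def by blast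
    moreover have "P ! idx P (i'-1) = i' - 1" using inP(3)[of i'] i' d(2) n_def by blast
    ultimately have "i - 1 = i' - 1" by simp
    then show "i = i'" using pos by linarith
  next
    fix i assume i: "i \<in> {1..length S}" and h: "\<alpha> i \<noteq> 0"
    then have d: "D!(i-1) \<noteq> 0" unfolding \<alpha>_def by (auto split: if_splits)
    have "t ! (\<alpha> i - 1) = t ! (2 * idx P (i-1) + 1)" using i d unfolding \<alpha>_def by simp
    also have "\<dots> = fst (map g P ! idx P (i-1))"
      unfolding t_def using inP[of i] i d n_def by (intro mk_odd) auto
    also have "\<dots> = S ! (i-1)" using inP[of i] i d n_def unfolding g_def by simp
    finally show "S ! (i - 1) = t ! (\<alpha> i - 1)" by simp
  qed
  define F where "F = (\<lambda>i. if \<alpha> i = 0 then 0 else prod_list (take (\<alpha> i - 1) t))"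
  have encD: "map F [1..<length S + 1] = D"
  proof (rule nth_equalityI)
    show "length (map F [1..<length S + 1]) = length D" using len by (simp del: upt_Suc)
  next
    fix k assume "k < length (map F [1..<length S + 1])"
    then have k: "k < n" unfolding n_def by (simp del: upt_Suc)
    have e: "[1..<length S + 1] ! k = Suc k" using k n_def by (simp del: upt_Suc)
    have lhs: "map F [1..<length S + 1] ! k = F (Suc k)"
      using k e n_def by (simp del: upt_Suc)
    show "map F [1..<length S + 1] ! k = D ! k"
    proof (cases "D!k = 0")
      case True then show ?thesis by (subst lhs) (simp add: F_def \<alpha>_def)
    next
      case False
      have r: "Suc k \<in> {1..n}" using k by simp
      have ix: "idx P k < length P" "P ! idx P k = k" using inP[OF r] False by simp_all
      have "prod_list (take (2 * idx P k + 1) t) = 1 * prod_list (take (2 * idx P k + 1) t)" by simp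
      also have "\<dots> = snd (map g P ! idx P k)"
        unfolding t_def using ix by (intro mk_prod[OF _ elts swP]) simp_all
      also have "\<dots> = D ! k" using ix unfolding g_def by simp
      finally show ?thesis using False by (subst lhs) (simp add: F_def \<alpha>_def)
    qed
  qed
  have enc: "encoded_layout S t \<alpha> = (S, D)"
    unfolding encoded_layout_def using encD unfolding F_def by simp
  show ?thesis using tm enc by blast
qed

theorem mainTheorem8:
  fixes S D :: "nat list"
  assumes "flat_layout S D"
  shows "(\<exists>s t \<alpha>. tuple_morphism s t \<alpha> \<and> encoded_layout s t \<alpha> = (S, D)) \<longleftrightarrow> tractable S D"
  using dir1 dir2[OF assms] by blast

end
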